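(* Fix constants $B>0$, $1\le\Gamma\le 3$, $0<\kappa\le 1$, and fixed Riemann data $\varrho_l>0$, $\varrho_r>0$, $\upsilon_l,\upsilon_r\ge 0$ with $\upsilon_r\le \upsilon_l-\frac{B}{\varrho_l^{\kappa}}$. For parameters $a>0$, $A>0$ (with $a<1/\max(\varrho_l,\varrho_r)$), let $p(\varrho)=A\left(\frac{\varrho}{1-a\varrho}\right)^{\Gamma}-\frac{B}{\varrho^{\kappa}}$, $p_l=p(\varrho_l)$, and let $\varrho_*=\varrho_*(a,A)\in(\varrho_l,1/a)$ be the intermediate density determined by $\upsilon_r=-p(\varrho_* )+\upsilon_l+p_l$. Then $\lim_{a,A\to 0}\varrho_*=+\infty$.
   Context: This concerns the Aw–Rascle type system $\varrho_t+(\varrho\upsilon)_x=0$, $(\varrho(\upsilon+p))_t+(\varrho\upsilon(\upsilon+p))_x=0$ with the pressure $p$ above, and Riemann initial data $(\varrho,\upsilon)(x,0)=(\varrho_l,\upsilon_l)$ for $x<0$, $(\varrho_r,\upsilon_r)$ for $x>0$. When $\upsilon_r<\upsilon_l$, the Riemann solution consists of a 1-shock $S$ from $(\varrho_l,\upsilon_l)$ to an intermediate state $(\varrho_*,\upsilon_* )$ with $\varrho_*>\varrho_l$ and $\upsilon_*+p(\varrho_* )=\upsilon_l+p_l$, followed by a contact discontinuity $J$ from $(\varrho_*,\upsilon_* )$ to $(\varrho_r,\upsilon_r)$ with $\upsilon_*=\upsilon_r$. The limit $a,A\to0$ is taken with $B,\Gamma,\kappa$ and the Riemann data fixed. *)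

theory Defs
  imports "HOL-Analysis.Analysis"
begin

definition AR_pressure :: "real \<Rightarrow> real \<Rightarrow> real \<Rightarrow> real \<Rightarrow> real \<Rightarrow> real \<Rightarrow> real" where
  "AR_pressure a A B \<Gamma> \<kappa> \<rho> = A * (\<rho> / (1 - a * \<rho>)) powr \<Gamma> - B / \<rho> powr \<kappa>"

definition rho_star :: "real \<Rightarrow> real \<Rightarrow> real \<Rightarrow> real \<Rightarrow> real \<Rightarrow> real \<Rightarrow> real \<Rightarrow> real \<Rightarrow> real" where
  "rho_star a A B \<Gamma> \<kappa> \<rho>l \<upsilon>l \<upsilon>r =
     (THE r. \<rho>l < r \<and> r < 1 / a \<and>
        \<upsilon>r = - AR_pressure a A B \<Gamma> \<kappa> r + \<upsilon>l + AR_pressure a A B \<Gamma> \<kappa> \<rho>l)"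

end

theory Submission
  imports Defs
begin

lemma P_mono:
  fixes a A B G k x y :: real
  assumes "0 < a" "0 < A" "0 < B" "0 < G" "0 < k" "0 < x" "x < y" "y < 1/a"
  shows "AR_pressure a A B G k x < AR_pressure a A B G k y"
proof -
  have ay: "a * y < 1" using assms by (simp add: field_simps)
  have ax: "a * x < 1" using assms ay by (smt (verit) mult_strict_left_mono)
  have q: "x / (1 - a*x) < y / (1 - a*y)"
  proof -
    have e1: "x*(1-a*y) = x - a*x*y" "y*(1-a*x) = y - a*x*y" by (simp_all add: algebra_simps)
    have "x*(1-a*y) < y*(1-a*x)" using e1 assms by linarith
    thus ?thesis using ax ay by (simp add: divide_simps)
  qed
  have q0: "0 \<le> x / (1 - a*x)" using ax assms by simp
  have "(x / (1 - a*x)) powr G < (y / (1 - a*y)) powr G"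
    using powr_less_mono2[OF assms(4) q0 q] .
  hence 1: "A * (x / (1 - a*x)) powr G < A * (y / (1 - a*y)) powr G" using assms by simp
  have "x powr k < y powr k" using powr_less_mono2[of k x y] assms by simp
  hence 2: "B / y powr k < B / x powr k" using assms by (simp add: divide_strict_left_mono)
  show ?thesis unfolding AR_pressure_def using 1 2 by linarith
qed

lemma P_cont:
  fixes a A B G k x :: real
  assumes "0 < a" "0 < x" "x < 1/a"
  shows "isCont (AR_pressure a A B G k) x"
proof -
  have ax: "a * x < 1" using assms by (simp add: field_simps)
  have "0 < x / (1 - a*x)" using ax assms by simp
  then show ?thesis unfolding AR_pressure_def
    using ax assms by (intro continuous_intros) auto
qed

lemma rho_star_prop:
  fixes a A B G k rl ul ur :: real
  assumes "0 < a" "0 < A" "0 < B" "1 \<le> G" "0 < k" "0 < rl" "rl < 1/a"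
    and "ur \<le> ul - B / rl powr k"
  shows "rl < rho_star a A B G k rl ul ur \<and> rho_star a A B G k rl ul ur < 1/a \<and>
         AR_pressure a A B G k (rho_star a A B G k rl ul ur) = ul - ur + AR_pressure a A B G k rl"
proof -
  let ?P = "AR_pressure a A B G k"
  define c where "c = ul - ur + ?P rl"
  have G0: "0 < G" using assms by simp
  have c_gt: "c > ?P rl" unfolding c_def using assms by (smt (verit) divide_pos_pos powr_gt_zero)
  define T where "T = max (max 1 ((c + B / rl powr k) / A)) (rl / (1 - a*rl))"
  have T1: "T \<ge> 1" unfolding T_def by simp
  define r1 where "r1 = T / (1 + a*T)"
  have aT: "0 < a*T" using T1 assms by simp
  have r1pos: "0 < r1" using T1 aT unfolding r1_def by (intro divide_pos_pos) auto
  have ar1e: "a*r1 = (a*T)/(1+a*T)" unfolding r1_def by simp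
  have "(a*T)/(1+a*T) < 1" using aT by simp
  hence ar1lt: "a*r1 < 1" using ar1e by simp
  hence r1lt: "r1 < 1/a" using assms by (simp add: field_simps)
  have hp: "0 < 1 + a*T" using aT by simp
  have ar1: "1 - a*r1 = 1/(1 + a*T)" using hp unfolding ar1e by (simp add: field_simps)
  have r1T: "r1 / (1 - a*r1) = T" using hp unfolding ar1 unfolding r1_def by (simp add: field_simps)
  have arl: "a * rl < 1" using assms by (simp add: field_simps)
  have "rl \<le> r1"
  proof (rule ccontr)
    assume "\<not> rl \<le> r1"
    hence "r1 < rl" by simp
    moreover have "r1*(1-a*rl) = r1 - a*r1*rl" "rl*(1-a*r1) = rl - a*r1*rl" by (simp_all add: algebra_simps)
    ultimately have "r1 * (1 - a*rl) < rl * (1 - a*r1)" by linarith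
    moreover have "0 < 1 - a*r1" "0 < 1 - a*rl" using ar1lt arl by simp_all
    ultimately have "r1 / (1 - a*r1) < rl / (1 - a*rl)"
      by (simp add: divide_simps)
    thus False using r1T unfolding T_def by simp
  qed
  have "T powr 1 \<le> T powr G" using T1 assms by (intro powr_mono) auto
  hence TG: "T \<le> T powr G" using T1 by simp
  have "(c + B / rl powr k) / A \<le> T" unfolding T_def by simp
  hence "(c + B / rl powr k) \<le> T * A" using assms(2) by (simp add: pos_divide_le_eq)
  hence "(c + B / rl powr k) \<le> A * T" by (simp add: mult.commute)
  hence h1: "c + B / rl powr k \<le> A * T powr G" using TG assms by (smt (verit) mult_left_mono)
  have "rl powr k \<le> r1 powr k" using \<open>rl \<le> r1\<close> assms by (intro powr_mono2) auto
  moreover have "0 < r1 powr k * rl powr k" using r1pos assms by simp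
  ultimately have "B / r1 powr k \<le> B / rl powr k" using assms by (intro divide_left_mono) auto
  hence "c \<le> ?P r1" unfolding AR_pressure_def r1T using h1 by linarith
  obtain r where r: "rl \<le> r" "r \<le> r1" "?P r = c"
    using IVT[of ?P rl c r1] c_gt \<open>c \<le> ?P r1\<close> \<open>rl \<le> r1\<close> P_cont[OF assms(1)] assms r1lt
    by fastforce
  have rne: "r \<noteq> rl" using r c_gt by auto
  have ex: "rl < r \<and> r < 1/a \<and> ur = - ?P r + ul + ?P rl"
    using r rne r1lt unfolding c_def by auto
  have uniq: "y = r" if "rl < y \<and> y < 1/a \<and> ur = - ?P y + ul + ?P rl" for y
  proof (rule ccontr)
    assume "y \<noteq> r"
    hence "y < r \<or> r < y" by auto
    thus False
    proof
      assume "y < r" thus False using P_mono[of a A B G k y r] that ex assms G0 by auto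
    next
      assume "r < y" thus False using P_mono[of a A B G k r y] that ex assms G0 by auto
    qed
  qed
  have "rho_star a A B G k rl ul ur = r"
    unfolding rho_star_def using ex uniq by (intro the_equality) auto
  thus ?thesis using ex by simp
qed

theorem lemma3p1:
  fixes B \<Gamma> \<kappa> \<rho>l \<rho>r \<upsilon>l \<upsilon>r :: real
  assumes "B > 0" and "1 \<le> \<Gamma>" and "\<Gamma> \<le> 3" and "0 < \<kappa>" and "\<kappa> \<le> 1"
    and "\<rho>l > 0" and "\<rho>r > 0" and "\<upsilon>l \<ge> 0" and "\<upsilon>r \<ge> 0"
    and "\<upsilon>r \<le> \<upsilon>l - B / \<rho>l powr \<kappa>"
  shows "filterlim (\<lambda>(a, A). rho_star a A B \<Gamma> \<kappa> \<rho>l \<upsilon>l \<upsilon>r) at_top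
           (at (0, 0) within ({0<..<1 / max \<rho>l \<rho>r} \<times> {0<..}))"
proof (subst filterlim_at_top, intro allI)
  fix M :: real
  define M' where "M' = max M (max \<rho>l 1)"
  have M'1: "M' \<ge> 1" "M' \<ge> M" "M' \<ge> \<rho>l" unfolding M'_def by auto
  define d where "d = min (1 / (2*M')) ((B / M' powr \<kappa>) / (2*M') powr \<Gamma>)"
  have dpos: "d > 0" unfolding d_def using M'1 assms by simp
  show "eventually (\<lambda>x. M \<le> (case x of (a, A) \<Rightarrow> rho_star a A B \<Gamma> \<kappa> \<rho>l \<upsilon>l \<upsilon>r))
          (at (0, 0) within ({0<..<1 / max \<rho>l \<rho>r} \<times> {0<..}))"
    unfolding eventually_at
  proof (intro exI[of _ d] conjI dpos ballI impI)
    fix x :: "real \<times> real"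
    assume xS: "x \<in> {0<..<1 / max \<rho>l \<rho>r} \<times> {0<..}" and "x \<noteq> (0,0) \<and> dist x (0,0) < d"
    obtain a A where x: "x = (a, A)" by force
    have a0: "0 < a" and A0: "0 < A" and amax: "a < 1 / max \<rho>l \<rho>r" using xS x by auto
    have "dist a 0 \<le> dist x (0,0)" "dist A 0 \<le> dist x (0,0)" unfolding x
      by (simp_all add: dist_Pair_Pair real_sqrt_ge_abs1 real_sqrt_ge_abs2 del: dist_0_norm)
    hence ad: "a < d" and Ad: "A < d" using \<open>x \<noteq> (0,0) \<and> dist x (0,0) < d\<close> a0 A0 by auto
    have "a * max \<rho>l \<rho>r < 1" using amax assms by (simp add: field_simps)
    hence "a * \<rho>l < 1" using a0 by (smt (verit) max.cobounded1 mult_left_mono)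
    hence rl1a: "\<rho>l < 1/a" using a0 by (simp add: field_simps)
    define r where "r = rho_star a A B \<Gamma> \<kappa> \<rho>l \<upsilon>l \<upsilon>r"
    have rp: "\<rho>l < r" "r < 1/a"
      "AR_pressure a A B \<Gamma> \<kappa> r = \<upsilon>l - \<upsilon>r + AR_pressure a A B \<Gamma> \<kappa> \<rho>l"
      using rho_star_prop[OF a0 A0 assms(1,2,4,6) rl1a assms(10)] unfolding r_def by auto
    have arl: "0 < 1 - a * \<rho>l" using \<open>a * \<rho>l < 1\<close> by simp
    have "0 < A * (\<rho>l / (1 - a*\<rho>l)) powr \<Gamma>" using A0 arl assms by simp
    hence Ppos: "AR_pressure a A B \<Gamma> \<kappa> r > 0" using rp(3) assms(10)
      unfolding AR_pressure_def by linarith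
    have "M' \<le> r"
    proof (rule ccontr)
      assume "\<not> M' \<le> r"
      hence rM: "r < M'" by simp
      have r0: "0 < r" using rp assms by simp
      have "a * M' \<le> 1/2" using ad M'1 a0 unfolding d_def by (simp add: field_simps)
      hence "a * r \<le> 1/2" using rM a0 by (smt (verit) mult_strict_left_mono)
      hence h12: "1/2 \<le> 1 - a*r" by simp
      have hM: "M' \<le> 2*M'*(1 - a*r)" using mult_left_mono[OF h12, of "2*M'"] M'1 by simp
      have hr: "r \<le> 2*M'*(1 - a*r)" using hM rM by linarith
      have q: "r / (1 - a*r) \<le> 2 * M'" using h12 hr by (simp add: pos_divide_le_eq)
      have q0: "0 \<le> r / (1 - a*r)" using \<open>a * r \<le> 1/2\<close> r0 by simp
      have "(r / (1 - a*r)) powr \<Gamma> \<le> (2*M') powr \<Gamma>"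
        using q q0 assms by (intro powr_mono2) auto
      hence "A * (r / (1 - a*r)) powr \<Gamma> \<le> A * (2*M') powr \<Gamma>" using A0 by simp
      also have "\<dots> < (B / M' powr \<kappa>)"
      proof -
        have "A < (B / M' powr \<kappa>) / (2*M') powr \<Gamma>" using Ad unfolding d_def by simp
        thus ?thesis using M'1 by (simp add: field_simps)
      qed
      also have "\<dots> \<le> B / r powr \<kappa>"
      proof -
        have "r powr \<kappa> \<le> M' powr \<kappa>" using rM r0 assms by (intro powr_mono2) auto
        moreover have "0 < M' powr \<kappa> * r powr \<kappa>" using M'1 r0 by simp
        ultimately show ?thesis using assms r0 by (intro divide_left_mono) auto
      qed
      finally show False using Ppos unfolding AR_pressure_def by linarith
    qed
    thus "M \<le> (case x of (a, A) \<Rightarrow> rho_star a A B \<Gamma> \<kappa> \<rho>l \<upsilon>l \<upsilon>r)"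
      using M'1 unfolding x r_def by simp
  qed
qed

end
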